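(* Let $u$ be a one-sided Sturmian sequence over $\{0,1\}$, let $X_u^+$ be the closure of $\{\sigma^n u : n\in\mathbb N\}$, and let $l=l_1l_2l_3\dots$ be the left special sequence of $X_u^+$, with $L_n=l_1\dots l_n$ for $n\ge 1$ and $L_0$ the empty block. Then the HB diagram of $X_u^+$ is the directed graph whose vertices are $0$, $1$, $0L_n$ and $1L_n$ for $n\ge 1$, and whose arrows are exactly the following: (1) if $l_1=0$: $0\to 1$, $0\to 00$ and $1\to 10$; if $l_1=1$: $1\to 0$, $1\to 11$ and $0\to 01$; (2) $0L_n\to 0L_{n+1}$ and $1L_n\to 1L_{n+1}$ for all $n\ge 1$; (3) whenever $xL_n$ and $wL_m$ ($x,w\in\{0,1\}$, $n>m\ge 0$) are consecutive right special significant blocks: (a) if $x\neq w$, then $xL_n\to wL_{m+1}$; (b) if $x=w$, then $xL_n\to \mathrm{sig}(wL_m y)$, where $y\in\{0,1\}$, $y\neq l_{m+1}$.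
   Context: A sequence $u\in\{0,1\}^{\mathbb N}$ is Sturmian if for every $n\ge1$ exactly $n+1$ distinct blocks of length $n$ occur in $u$. Let $\tilde X_u=\{x\in\{0,1\}^{\mathbb Z}: x_px_{p+1}\dots\in X_u^+ \text{ for all } p\in\mathbb Z\}$ be the natural extension; the languages (sets of finite blocks occurring) of $u$, $X_u^+$ and $\tilde X_u$ coincide. For each $n$ there is a unique block $L_n$ of length $n$ with both $0L_n$ and $1L_n$ in the language (left special block), and these are the prefixes of a single infinite sequence $l=l_1l_2\dots$, the left special sequence. A block $v$ is right special if both $v0$ and $v1$ are in the language; there is exactly one right special block of each length. For a block $a_{-n}\dots a_0$ in the language, $\mathrm{fol}(a_{-n}\dots a_0)=\{b_0b_1\dots\in X_u^+:\exists b\in\tilde X_u,\ b_{-n}\dots b_0=a_{-n}\dots a_0\}$. A block $a_{-n}\dots a_0$ ($n\ge1$) is significant if $\mathrm{fol}(a_{-n}\dots a_0)\subsetneq \mathrm{fol}(a_{-n+1}\dots a_0)$; the blocks $0$ and $1$ are also counted as significant. $\mathrm{sig}(a_{-n}\dots a_0)$ denotes the longest significant suffix of $a_{-n}\dots a_0$. The HB diagram has as vertices the significant blocks, with an arrow $\alpha\to\beta$ iff there is a symbol $b$ with $\alpha b$ in the language and $\beta=\mathrm{sig}(\alpha b)$. Two right special significant blocks of lengths $m+1<n+1$ are consecutive if there is no right special significant block of length strictly between $m+1$ and $n+1$. *)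

theory Defs
  imports Main
begin

text \<open>Alphabet {0,1} is encoded as bool: False = 0, True = 1.
  One-sided sequences are nat => bool, two-sided ones int => bool,
  finite blocks are lists (first element = leftmost symbol).\<close>

definition lang :: "(nat \<Rightarrow> bool) \<Rightarrow> bool list set" where
  "lang u = {w. \<exists>i. w = map u [i..<i + length w]}"

definition sturmian :: "(nat \<Rightarrow> bool) \<Rightarrow> bool" where
  "sturmian u \<longleftrightarrow> (\<forall>n\<ge>1. card {w \<in> lang u. length w = n} = n + 1)"

text \<open>Closure of the shift orbit of u in the product topology: exactly the
  sequences all of whose finite blocks occur in u.\<close>
definition Xplus :: "(nat \<Rightarrow> bool) \<Rightarrow> (nat \<Rightarrow> bool) set" where
  "Xplus u = {x. \<forall>i n. map x [i..<i + n] \<in> lang u}"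

definition Xtilde :: "(nat \<Rightarrow> bool) \<Rightarrow> (int \<Rightarrow> bool) set" where
  "Xtilde u = {x. \<forall>p. (\<lambda>k. x (p + int k)) \<in> Xplus u}"

definition L :: "(nat \<Rightarrow> bool) \<Rightarrow> nat \<Rightarrow> bool list" where
  "L u n = (THE w. length w = n \<and> False # w \<in> lang u \<and> True # w \<in> lang u)"

text \<open>Left special sequence, 1-indexed: lsym u k = l_k (k >= 1).\<close>
definition lsym :: "(nat \<Rightarrow> bool) \<Rightarrow> nat \<Rightarrow> bool" where
  "lsym u k = L u k ! (k - 1)"

definition right_special :: "(nat \<Rightarrow> bool) \<Rightarrow> bool list \<Rightarrow> bool" where
  "right_special u v \<longleftrightarrow> v @ [False] \<in> lang u \<and> v @ [True] \<in> lang u"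

text \<open>fol(a_{-n}..a_0): the block w = [a_{-n},...,a_0] sits at positions -n..0.\<close>
definition fol :: "(nat \<Rightarrow> bool) \<Rightarrow> bool list \<Rightarrow> (nat \<Rightarrow> bool) set" where
  "fol u w = {b \<in> Xplus u. \<exists>x \<in> Xtilde u.
      (\<forall>k < length w. x (int k - int (length w) + 1) = w ! k) \<and> (\<forall>i. b i = x (int i))}"

definition significant :: "(nat \<Rightarrow> bool) \<Rightarrow> bool list \<Rightarrow> bool" where
  "significant u w \<longleftrightarrow> w \<in> lang u \<and>
     (length w = 1 \<or> (length w \<ge> 2 \<and> fol u w \<subset> fol u (tl w)))"

definition sig :: "(nat \<Rightarrow> bool) \<Rightarrow> bool list \<Rightarrow> bool list" where
  "sig u w = drop (LEAST k. significant u (drop k w)) w"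

definition HB_vertices :: "(nat \<Rightarrow> bool) \<Rightarrow> bool list set" where
  "HB_vertices u = {w. significant u w}"

definition HB_arrows :: "(nat \<Rightarrow> bool) \<Rightarrow> (bool list \<times> bool list) set" where
  "HB_arrows u = {(\<alpha>, \<beta>). significant u \<alpha> \<and>
      (\<exists>b. \<alpha> @ [b] \<in> lang u \<and> \<beta> = sig u (\<alpha> @ [b]))}"

definition consecutive_rss :: "(nat \<Rightarrow> bool) \<Rightarrow> bool list \<Rightarrow> bool list \<Rightarrow> bool" where
  "consecutive_rss u v v' \<longleftrightarrow>
     right_special u v \<and> significant u v \<and> right_special u v' \<and> significant u v' \<and>
     length v < length v' \<and>
     \<not> (\<exists>z. right_special u z \<and> significant u z \<and>
            length v < length z \<and> length z < length v')"

end

theory Submission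
  imports Defs
begin

definition win :: "(nat \<Rightarrow> bool) \<Rightarrow> nat \<Rightarrow> nat \<Rightarrow> bool list" where
  "win u i n = map u [i..<i+n]"

lemma length_win[simp]: "length (win u i n) = n"
  by (simp add: win_def)

lemma nth_win[simp]: "k < n \<Longrightarrow> win u i n ! k = u (i + k)"
  by (simp add: win_def)

lemma win_in_lang[simp]: "win u i n \<in> lang u"
  unfolding lang_def win_def by auto

lemma lang_iff: "w \<in> lang u \<longleftrightarrow> (\<exists>i. win u i (length w) = w)"
  unfolding lang_def win_def mem_Collect_eq by (rule ex_cong1) (rule eq_commute)

lemma win_eqI: "length w = n \<Longrightarrow> (\<And>k. k < n \<Longrightarrow> u (i + k) = w ! k) \<Longrightarrow> win u i n = w"
  by (rule nth_equalityI) auto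

lemma lang_nth: "w \<in> lang u \<longleftrightarrow> (\<exists>i. \<forall>k<length w. u (i + k) = w ! k)"
proof
  assume "w \<in> lang u"
  then obtain i where "win u i (length w) = w" by (auto simp: lang_iff)
  then have "\<forall>k<length w. u (i + k) = w ! k" by (metis nth_win)
  then show "\<exists>i. \<forall>k<length w. u (i + k) = w ! k" by blast
next
  assume "\<exists>i. \<forall>k<length w. u (i + k) = w ! k"
  then obtain i where "\<forall>k<length w. u (i + k) = w ! k" by blast
  then have "win u i (length w) = w" by (intro win_eqI) auto
  then show "w \<in> lang u" by (auto simp: lang_iff)
qed

lemma lang_append_left: "p @ w \<in> lang u \<Longrightarrow> w \<in> lang u"
proof -
  assume "p @ w \<in> lang u"
  then obtain i where i: "\<forall>k<length (p @ w). u (i + k) = (p @ w) ! k" by (auto simp: lang_nth)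
  have "\<forall>k<length w. u ((i + length p) + k) = w ! k"
  proof (intro allI impI)
    fix k assume "k < length w"
    then show "u ((i + length p) + k) = w ! k" using i[rule_format, of "length p + k"]
      by (simp add: nth_append add.assoc)
  qed
  then show ?thesis by (auto simp: lang_nth)
qed

lemma lang_append_right: "w @ s \<in> lang u \<Longrightarrow> w \<in> lang u"
proof -
  assume "w @ s \<in> lang u"
  then obtain i where i: "\<forall>k<length (w @ s). u (i + k) = (w @ s) ! k" by (auto simp: lang_nth)
  have "\<forall>k<length w. u (i + k) = w ! k"
    using i by (auto simp: nth_append)
  then show ?thesis by (auto simp: lang_nth)
qed

lemma lang_Cons: "a # w \<in> lang u \<Longrightarrow> w \<in> lang u"
  using lang_append_left[of "[a]" w u] by simp

lemma lang_snoc: "w @ [a] \<in> lang u \<Longrightarrow> w \<in> lang u"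
  using lang_append_right by blast

lemma lang_infix: "p @ w @ s \<in> lang u \<Longrightarrow> w \<in> lang u"
  using lang_append_left lang_append_right by blast

lemma lang_take: "w \<in> lang u \<Longrightarrow> take k w \<in> lang u"
  by (metis append_take_drop_id lang_append_right)

lemma lang_drop: "w \<in> lang u \<Longrightarrow> drop k w \<in> lang u"
  by (metis append_take_drop_id lang_append_left)

lemma win_Suc_snoc: "win u i (Suc n) = win u i n @ [u (i + n)]"
  by (simp add: win_def)

lemma win_Suc_Cons: "win u i (Suc n) = u i # win u (Suc i) n"
  by (simp add: win_def upt_conv_Cons del: upt_Suc)

lemma win_shift: "win u (Suc i) n = tl (win u i (Suc n))"
  by (simp add: win_Suc_Cons)

lemma lang_ext_right: "w \<in> lang u \<Longrightarrow> \<exists>b. w @ [b] \<in> lang u"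
proof -
  assume "w \<in> lang u"
  then obtain i where "win u i (length w) = w" by (auto simp: lang_iff)
  then have "w @ [u (i + length w)] = win u i (Suc (length w))" by (simp add: win_Suc_snoc)
  then show ?thesis by (metis win_in_lang)
qed

lemma lang_nil[simp]: "[] \<in> lang u"
  by (metis win_in_lang length_win length_0_conv)

definition langn :: "(nat \<Rightarrow> bool) \<Rightarrow> nat \<Rightarrow> bool list set" where
  "langn u n = {w \<in> lang u. length w = n}"

lemma finite_langn[simp]: "finite (langn u n)"
proof -
  have "langn u n \<subseteq> {xs. set xs \<subseteq> (UNIV::bool set) \<and> length xs = n}"
    by (auto simp: langn_def)
  moreover have "finite {xs. set xs \<subseteq> (UNIV::bool set) \<and> length xs = n}"
    by (rule finite_lists_length_eq) simp
  ultimately show ?thesis by (rule finite_subset)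
qed

lemma langn_0: "langn u 0 = {[]}"
  by (auto simp: langn_def)

lemma card_step_right:
  "card (langn u (Suc n)) = card (langn u n) + card {w \<in> langn u n. right_special u w}"
proof -
  define A where "A b = {w \<in> langn u n. w @ [b] \<in> lang u}" for b
  have fin: "finite (A b)" for b unfolding A_def by simp
  have "langn u (Suc n) = (\<lambda>w. w @ [False]) ` A False \<union> (\<lambda>w. w @ [True]) ` A True"
  proof (intro equalityI subsetI)
    fix v assume v: "v \<in> langn u (Suc n)"
    then have "v \<noteq> []" by (auto simp: langn_def)
    then obtain w b where vw: "v = w @ [b]" by (metis rev_exhaust)
    with v have "w \<in> A b" by (auto simp: A_def langn_def dest: lang_snoc)
    then show "v \<in> (\<lambda>w. w @ [False]) ` A False \<union> (\<lambda>w. w @ [True]) ` A True"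
      using vw by (cases b) auto
  qed (auto simp: A_def langn_def)
  moreover have "(\<lambda>w. w @ [False]) ` A False \<inter> (\<lambda>w. w @ [True]) ` A True = {}" by auto
  ultimately have "card (langn u (Suc n)) = card ((\<lambda>w. w @ [False]) ` A False) + card ((\<lambda>w. w @ [True]) ` A True)"
    by (simp add: card_Un_disjoint fin)
  also have "\<dots> = card (A False) + card (A True)"
    by (simp add: card_image inj_on_def)
  also have "\<dots> = card (A False \<union> A True) + card (A False \<inter> A True)"
    by (rule card_Un_Int[OF fin fin])
  also have "A False \<union> A True = langn u n"
  proof (intro equalityI subsetI)
    fix w assume "w \<in> langn u n"
    then obtain b where "w @ [b] \<in> lang u" by (auto simp: langn_def dest: lang_ext_right)
    then show "w \<in> A False \<union> A True" using \<open>w \<in> langn u n\<close> by (cases b) (auto simp: A_def)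
  qed (auto simp: A_def)
  also have "A False \<inter> A True = {w \<in> langn u n. right_special u w}"
    by (auto simp: A_def right_special_def)
  finally show ?thesis .
qed


lemma card_langn_mono: "card (langn u n) \<le> card (langn u (Suc n))"
  using card_step_right[of u n] by simp

lemma card_langn_0: "card (langn u 0) = 1"
  by (simp add: langn_0)

lemma no_RS_periodic:
  assumes "{w \<in> langn v m. right_special v w} = {}"
  shows "\<exists>i i'. i < i' \<and> (\<forall>t. v (i + t) = v (i' + t))"
proof -
  let ?N = "card (langn v m)"
  have "(\<lambda>i. win v i m) ` {..?N} \<subseteq> langn v m" by (auto simp: langn_def)
  then have "card ((\<lambda>i. win v i m) ` {..?N}) \<le> ?N" by (simp add: card_mono)
  then have "\<not> inj_on (\<lambda>i. win v i m) {..?N}"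
    using card_image by fastforce
  then obtain i i' where ii: "i \<noteq> i'" "win v i m = win v i' m"
    by (auto simp: inj_on_def)
  then obtain a b where ab: "a < b" "win v a m = win v b m"
    by (metis linorder_neqE_nat)
  have "v (a + t) = v (b + t)" for t
  proof (induction t rule: less_induct)
    case (less t)
    show ?case
    proof (cases "t < m")
      case True
      then show ?thesis using ab(2) by (metis nth_win)
    next
      case False
      define s where "s = t - m"
      have ws: "win v (a + s) m = win v (b + s) m"
      proof (rule nth_equalityI)
        fix k assume "k < length (win v (a + s) m)"
        then have "k < m" by simp
        then have "s + k < t" using False by (simp add: s_def)
        then have "v (a + (s + k)) = v (b + (s + k))" by (rule less.IH)
        then show "win v (a + s) m ! k = win v (b + s) m ! k" using \<open>k < m\<close> by (simp add: add.assoc)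
      qed simp
      have "win v (a + s) m @ [v (a + s + m)] \<in> lang v"
        by (metis win_Suc_snoc win_in_lang)
      moreover have "win v (a + s) m @ [v (b + s + m)] \<in> lang v"
        by (metis ws win_Suc_snoc win_in_lang)
      moreover have "\<not> right_special v (win v (a + s) m)"
        using assms by (auto simp: langn_def)
      ultimately have "v (a + s + m) = v (b + s + m)"
        unfolding right_special_def by (metis (full_types))
      then show ?thesis using False by (simp add: s_def add.assoc)
    qed
  qed
  then show ?thesis using ab(1) by blast
qed

lemma small_complexity_periodic:
  assumes "card (langn v n) \<le> n"
  shows "\<exists>i i'. i < i' \<and> (\<forall>t. v (i + t) = v (i' + t))"
proof -
  have "\<exists>m. {w \<in> langn v m. right_special v w} = {}"
  proof (rule ccontr)
    assume "\<nexists>m. {w \<in> langn v m. right_special v w} = {}"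
    then have pos: "card {w \<in> langn v m. right_special v w} \<ge> 1" for m
      by (metis (no_types, lifting) One_nat_def Suc_leI card_gt_0_iff finite_langn finite_subset mem_Collect_eq subsetI)
    have ge: "card (langn v k) \<ge> k + 1" for k
    proof (induction k)
      case 0 then show ?case by (simp add: card_langn_0)
    next
      case (Suc k) then show ?case using card_step_right[of v k] pos[of k] by simp
    qed
    show False using ge[of n] assms by simp
  qed
  then show ?thesis using no_RS_periodic by blast
qed

locale sturm =
  fixes u :: "nat \<Rightarrow> bool"
  assumes st: "sturmian u"
begin

lemma card_langn: "card (langn u n) = n + 1"
proof (cases "n = 0")
  case True then show ?thesis by (simp add: card_langn_0)
next
  case False
  then have "card {w \<in> lang u. length w = n} = n + 1" using st by (simp add: sturmian_def)
  then show ?thesis by (simp add: langn_def)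
qed

lemma not_periodic:
  assumes "i < i'" "\<forall>t. u (i + t) = u (i' + t)"
  shows False
proof -
  let ?P = "i' - i"
  have per: "u j = u (j - ?P)" if "j \<ge> i'" for j
  proof -
    have "j - ?P = i + (j - i')" using that assms(1) by simp
    moreover have "i' + (j - i') = j" using that by simp
    ultimately show ?thesis using assms(2)[rule_format, of "j - i'"] by simp
  qed
  have "win u j n \<in> (\<lambda>j. win u j n) ` {..<i'}" for j n
  proof (induction j rule: less_induct)
    case (less j)
    show ?case
    proof (cases "j < i'")
      case True then show ?thesis by auto
    next
      case False
      have "win u j n = win u (j - ?P) n"
        by (rule nth_equalityI) (use False per in \<open>auto simp: algebra_simps\<close>)
      moreover have "j - ?P < j" using assms(1) False by simp
      ultimately show ?thesis using less.IH by metis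
    qed
  qed
  then have "langn u i' \<subseteq> (\<lambda>j. win u j i') ` {..<i'}"
    by (auto simp: langn_def lang_iff) (metis)
  then have "card (langn u i') \<le> card ((\<lambda>j. win u j i') ` {..<i'})" by (simp add: card_mono)
  also have "\<dots> \<le> i'" using card_image_le[of "{..<i'}" "\<lambda>j. win u j i'"] by simp
  finally show False using card_langn[of i'] by simp
qed

lemma recurrent:
  assumes "w \<in> lang u"
  shows "\<exists>i\<ge>j. win u i (length w) = w"
proof (rule ccontr)
  assume nr: "\<not> (\<exists>i\<ge>j. win u i (length w) = w)"
  define v where "v t = u (j + t)" for t
  obtain i0 where i0: "win u i0 (length w) = w" using assms by (auto simp: lang_iff)
  let ?n = "length w"
  have winv: "win v i n = win u (j + i) n" for i n
    by (rule nth_equalityI) (auto simp: v_def add.assoc)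
  have sub: "langn v ?n \<subseteq> langn u ?n - {w}"
  proof
    fix x assume "x \<in> langn v ?n"
    then obtain i where "win v i ?n = x" "length x = ?n" by (auto simp: langn_def lang_iff)
    then have "win u (j + i) ?n = x" by (simp add: winv)
    then show "x \<in> langn u ?n - {w}" using nr \<open>length x = ?n\<close>
      by (auto simp: langn_def)
  qed
  have "w \<in> langn u ?n" using assms by (simp add: langn_def)
  then have "card (langn v ?n) \<le> card (langn u ?n) - 1"
    using sub by (metis card_Diff_singleton card_mono finite_Diff finite_langn)
  then have "card (langn v ?n) \<le> ?n" by (simp add: card_langn)
  then obtain a b where "a < b" "\<forall>t. v (a + t) = v (b + t)"
    using small_complexity_periodic by blast
  then have "j + a < j + b" "\<forall>t. u (j + a + t) = u (j + b + t)" by (auto simp: v_def add.assoc)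
  then show False by (rule not_periodic)
qed

lemma lang_ext_left: "w \<in> lang u \<Longrightarrow> \<exists>a. a # w \<in> lang u"
proof -
  assume "w \<in> lang u"
  then obtain i where i: "i \<ge> 1" "win u i (length w) = w" using recurrent by blast
  then have "win u (i - 1) (Suc (length w)) = u (i - 1) # w"
    by (simp add: win_Suc_Cons)
  then show ?thesis by (metis win_in_lang)
qed

end

definition left_special :: "(nat \<Rightarrow> bool) \<Rightarrow> bool list \<Rightarrow> bool" where
  "left_special u w \<longleftrightarrow> False # w \<in> lang u \<and> True # w \<in> lang u"

context sturm begin

lemma card_step_left:
  "card (langn u (Suc n)) = card (langn u n) + card {w \<in> langn u n. left_special u w}"
proof -
  define A where "A b = {w \<in> langn u n. b # w \<in> lang u}" for b
  have fin: "finite (A b)" for b unfolding A_def by simp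
  have "langn u (Suc n) = (\<lambda>w. False # w) ` A False \<union> (\<lambda>w. True # w) ` A True"
  proof (intro equalityI subsetI)
    fix v assume v: "v \<in> langn u (Suc n)"
    then obtain w b where vw: "v = b # w" by (cases v) (auto simp: langn_def)
    with v have "w \<in> A b" by (auto simp: A_def langn_def dest: lang_Cons)
    then show "v \<in> (\<lambda>w. False # w) ` A False \<union> (\<lambda>w. True # w) ` A True"
      using vw by (cases b) auto
  qed (auto simp: A_def langn_def)
  moreover have "(\<lambda>w. False # w) ` A False \<inter> (\<lambda>w. True # w) ` A True = {}" by auto
  ultimately have "card (langn u (Suc n)) = card ((\<lambda>w. False # w) ` A False) + card ((\<lambda>w. True # w) ` A True)"
    by (simp add: card_Un_disjoint fin)
  also have "\<dots> = card (A False) + card (A True)"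
    by (simp add: card_image inj_on_def)
  also have "\<dots> = card (A False \<union> A True) + card (A False \<inter> A True)"
    by (rule card_Un_Int[OF fin fin])
  also have "A False \<union> A True = langn u n"
  proof (intro equalityI subsetI)
    fix w assume "w \<in> langn u n"
    then obtain b where "b # w \<in> lang u" by (auto simp: langn_def dest: lang_ext_left)
    then show "w \<in> A False \<union> A True" using \<open>w \<in> langn u n\<close> by (cases b) (auto simp: A_def)
  qed (auto simp: A_def)
  also have "A False \<inter> A True = {w \<in> langn u n. left_special u w}"
    by (auto simp: A_def left_special_def)
  finally show ?thesis .
qed

lemma card_RS: "card {w \<in> langn u n. right_special u w} = 1"
  using card_step_right[of u n] card_langn[of n] card_langn[of "Suc n"] by simp

lemma card_LS: "card {w \<in> langn u n. left_special u w} = 1"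
  using card_step_left[of n] card_langn[of n] card_langn[of "Suc n"] by simp

lemma RS_lang: "right_special u v \<Longrightarrow> v \<in> lang u"
  unfolding right_special_def using lang_snoc by blast

lemma LS_lang: "left_special u v \<Longrightarrow> v \<in> lang u"
  unfolding left_special_def using lang_Cons by blast

lemma RS_unique: "right_special u v \<Longrightarrow> right_special u v' \<Longrightarrow> length v = length v' \<Longrightarrow> v = v'"
proof -
  assume a: "right_special u v" "right_special u v'" "length v = length v'"
  obtain z where "{w \<in> langn u (length v). right_special u w} = {z}"
    using card_RS card_1_singletonE by blast
  then show "v = v'" using a RS_lang by (auto simp: langn_def) (metis (mono_tags, lifting) mem_Collect_eq singletonD)+
qed

lemma RS_ex: "\<exists>v. length v = n \<and> right_special u v"
proof -
  obtain z where "{w \<in> langn u n. right_special u w} = {z}"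
    using card_RS card_1_singletonE by blast
  then show ?thesis by (auto simp: langn_def)
qed

lemma LS_unique: "left_special u v \<Longrightarrow> left_special u v' \<Longrightarrow> length v = length v' \<Longrightarrow> v = v'"
proof -
  assume a: "left_special u v" "left_special u v'" "length v = length v'"
  obtain z where "{w \<in> langn u (length v). left_special u w} = {z}"
    using card_LS card_1_singletonE by blast
  then show "v = v'" using a LS_lang by (auto simp: langn_def) (metis (mono_tags, lifting) mem_Collect_eq singletonD)+
qed

lemma LS_ex: "\<exists>v. length v = n \<and> left_special u v"
proof -
  obtain z where "{w \<in> langn u n. left_special u w} = {z}"
    using card_LS card_1_singletonE by blast
  then show ?thesis by (auto simp: langn_def)
qed

lemma L_spec: "length (L u n) = n \<and> left_special u (L u n)"
proof -
  have ex1: "\<exists>!w. length w = n \<and> False # w \<in> lang u \<and> True # w \<in> lang u"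
    using LS_ex LS_unique unfolding left_special_def by metis
  show ?thesis unfolding L_def left_special_def by (rule theI'[OF ex1])
qed

lemma length_L[simp]: "length (L u n) = n"
  using L_spec by blast

lemma L_LS: "left_special u (L u n)"
  using L_spec by blast

lemma L_lang: "L u n \<in> lang u"
  using L_LS LS_lang by blast

lemma L_Cons_lang: "x # L u n \<in> lang u"
  using L_LS unfolding left_special_def by (cases x) auto

lemma L_unique: "left_special u w \<Longrightarrow> L u (length w) = w"
  using L_LS LS_unique length_L by metis

lemma L_0[simp]: "L u 0 = []"
  by (metis length_0_conv length_L)

lemma LS_take: "left_special u w \<Longrightarrow> left_special u (take k w)"
  unfolding left_special_def by (metis lang_take take_Suc_Cons)

lemma L_take: "m \<le> n \<Longrightarrow> take m (L u n) = L u m"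
proof -
  assume "m \<le> n"
  then have "length (take m (L u n)) = m" by simp
  then show ?thesis using L_unique[OF LS_take[OF L_LS]] by metis
qed

lemma L_Suc: "L u (Suc n) = L u n @ [lsym u (Suc n)]"
proof -
  have "L u (Suc n) = take n (L u (Suc n)) @ [L u (Suc n) ! n]"
    by (metis length_L lessI take_Suc_conv_app_nth take_all order_refl)
  then show ?thesis using L_take[of n "Suc n"] by (simp add: lsym_def)
qed

lemma RS_suffix: "right_special u (p @ v) \<Longrightarrow> right_special u v"
  unfolding right_special_def by (metis append_assoc lang_append_left)

lemma RS_Nil: "right_special u []"
proof -
  obtain v where "length v = 0" "right_special u v" using RS_ex by blast
  then show ?thesis by simp
qed

lemma lang_single[simp]: "[b] \<in> lang u"
  using RS_Nil unfolding right_special_def by (cases b) auto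

end

lemma win_decomp: "win u i (Suc (Suc N)) = u i # win u (Suc i) N @ [u (Suc i + N)]"
  unfolding win_Suc_Cons[of u i "Suc N"] win_Suc_snoc[of u "Suc i" N] by simp

lemma win_decomp_eq:
  assumes "win u i (Suc (Suc N)) = c # B @ [d]" "length B = N"
  shows "u i = c" "win u (Suc i) N = B" "u (Suc i + N) = d"
  using assms by (simp_all add: win_decomp)

context sturm begin

lemma win_step:
  assumes "win u x N = win u y N" "\<not> right_special u (win u x N)"
  shows "u (x + N) = u (y + N)" "win u (Suc x) N = win u (Suc y) N"
proof -
  have a: "win u x N @ [u (x + N)] \<in> lang u" by (metis win_Suc_snoc win_in_lang)
  have b: "win u x N @ [u (y + N)] \<in> lang u" by (metis assms(1) win_Suc_snoc win_in_lang)
  show "u (x + N) = u (y + N)"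
  proof (rule ccontr)
    assume "u (x + N) \<noteq> u (y + N)"
    then have "right_special u (win u x N)" using a b unfolding right_special_def
      by (cases "u (x + N)") auto
    then show False using assms(2) by simp
  qed
  then show "win u (Suc x) N = win u (Suc y) N"
    by (simp add: win_shift win_Suc_snoc assms(1))
qed

lemma ret_len:
  assumes B: "right_special u B" and N: "length B = N"
    and r: "win u r N = B" and q: "win u q N = B" and rq: "r < q"
    and gap: "\<forall>s. r < s \<and> s < q \<longrightarrow> win u s N \<noteq> B"
  shows "q - r \<le> N + 1"
proof -
  define k where "k = q - r"
  define f where "f t = win u (r + t) N" for t
  have nonRS: "\<not> right_special u (win u s N)" if "r < s" "s < q" for s
    using RS_unique[OF _ B] gap that N by fastforce
  have contra: False if t12: "t1 < t2" "t2 < k" and eq: "f t1 = f t2" for t1 t2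
  proof (cases "t1 = 0")
    case True
    then have "win u (r + t2) N = B" using eq r by (simp add: f_def)
    moreover have "r < r + t2" "r + t2 < q" using t12 True by (auto simp: k_def)
    ultimately show False using gap by blast
  next
    case False
    have "s \<le> k - t2 \<longrightarrow> win u (r + t1 + s) N = win u (r + t2 + s) N" for s
    proof (induction s)
      case 0 then show ?case using eq by (simp add: f_def)
    next
      case (Suc s)
      show ?case
      proof
        assume s: "Suc s \<le> k - t2"
        then have e: "win u (r + t1 + s) N = win u (r + t2 + s) N" using Suc by simp
        have "r < r + t1 + s" "r + t1 + s < q" using False s t12 by (auto simp: k_def)
        then have "\<not> right_special u (win u (r + t1 + s) N)" by (rule nonRS)
        from win_step(2)[OF e this] show "win u (r + t1 + Suc s) N = win u (r + t2 + Suc s) N"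
          by simp
      qed
    qed
    from this[of "k - t2"] have "win u (r + t1 + (k - t2)) N = win u q N"
      using t12 rq by (simp add: k_def)
    then have "win u (r + t1 + (k - t2)) N = B" using q by simp
    moreover have "r < r + t1 + (k - t2)" "r + t1 + (k - t2) < q" using False t12 rq by (auto simp: k_def)
    ultimately show False using gap by blast
  qed
  have "inj_on f {..<k}"
  proof (rule inj_onI)
    fix t1 t2 assume "t1 \<in> {..<k}" "t2 \<in> {..<k}" "f t1 = f t2"
    then show "t1 = t2" using contra by (metis lessThan_iff linorder_neqE_nat)
  qed
  then have "card (f ` {..<k}) = k" by (simp add: card_image)
  moreover have "f ` {..<k} \<subseteq> langn u N" by (auto simp: f_def langn_def)
  ultimately have "k \<le> card (langn u N)" by (metis card_mono finite_langn)
  then show ?thesis by (simp add: card_langn k_def)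
qed

lemma ret_sym:
  assumes B: "right_special u B" and N: "length B = N" and pal: "rev B = B"
    and r: "win u r N = B" and q: "win u q N = B" and rq: "r < q"
    and gap: "\<forall>s. r < s \<and> s < q \<longrightarrow> win u s N \<noteq> B"
  shows "u (r + N) = u (q - 1)"
proof -
  have k: "q - r \<le> N + 1" by (rule ret_len[OF assms(1,2,4,5,6,7)])
  show ?thesis
  proof (cases "q - r = N + 1")
    case True
    then have "q - 1 = r + N" using rq by linarith
    then show ?thesis by simp
  next
    case False
    define k where "k = q - r"
    have kN: "k \<le> N" "1 \<le> k" using k False rq by (auto simp: k_def)
    have e1: "q + (N - k) = r + N" using kN rq unfolding k_def by linarith
    have "u (r + N) = u (q + (N - k))" using e1 by simp
    also have "\<dots> = B ! (N - k)" using q kN by (metis nth_win diff_less less_le_trans zero_less_one)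
    also have "\<dots> = rev B ! (k - 1)" using N kN by (simp add: rev_nth)
    also have "\<dots> = B ! (k - 1)" using pal by simp
    also have "\<dots> = u (r + (k - 1))" using r kN by (metis nth_win diff_less less_le_trans zero_less_one)
    also have "r + (k - 1) = q - 1" using kN rq by (simp add: k_def)
    finally show ?thesis .
  qed
qed

lemma mixed:
  assumes LS: "left_special u B" and RS: "right_special u B" and pal: "rev B = B"
  shows "e # B @ [\<not> e] \<in> lang u"
proof (rule ccontr)
  assume miss: "e # B @ [\<not> e] \<notin> lang u"
  define N where "N = length B"
  have eBe: "e # B @ [e] \<in> lang u"
  proof -
    have "e # B \<in> lang u" using LS unfolding left_special_def by (cases e) auto
    then obtain b where "(e # B) @ [b] \<in> lang u" using lang_ext_right by blast
    then show ?thesis using miss by (cases b; cases e) auto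
  qed
  have nBn: "(\<not> e) # B @ [\<not> e] \<in> lang u"
  proof -
    have "B @ [\<not> e] \<in> lang u" using RS unfolding right_special_def by (cases e) auto
    then obtain a where "a # B @ [\<not> e] \<in> lang u" using lang_ext_left by blast
    then show ?thesis using miss by (cases a; cases e) auto
  qed
  have helper: "u (r + N) = e" if "win u r N = B" "r \<ge> 1" "u (r - 1) = e" for r
  proof -
    have "win u (r - 1) (Suc (Suc N)) = u (r - 1) # win u r N @ [u (r + N)]"
      using win_decomp[of u "r - 1" N] that(2) by simp
    then have "win u (r - 1) (Suc (Suc N)) = e # B @ [u (r + N)]" using that by simp
    then have "e # B @ [u (r + N)] \<in> lang u" by (metis win_in_lang)
    then show ?thesis using miss by (cases "u (r + N)"; cases e) auto
  qed
  obtain p0 where p0: "win u p0 (Suc (Suc N)) = e # B @ [e]"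
    using eBe lang_iff N_def by fastforce
  define p where "p = Suc p0"
  have pB: "win u p N = B" and pe: "u (p - 1) = e"
    using win_decomp_eq[OF p0] N_def by (auto simp: p_def)
  have claim: "p \<le> r \<longrightarrow> win u r N = B \<longrightarrow> u (r - 1) = e \<and> u (r + N) = e" for r
  proof (induction r rule: less_induct)
    case (less r)
    show ?case
    proof (intro impI)
      assume pr: "p \<le> r" and rB: "win u r N = B"
      have r1: "r \<ge> 1" using pr by (simp add: p_def)
      have re: "u (r - 1) = e"
      proof (cases "r = p")
        case True then show ?thesis using pe by simp
      next
        case False
        define S where "S = {s. p \<le> s \<and> s < r \<and> win u s N = B}"
        have finS: "finite S" unfolding S_def by (rule finite_subset[of _ "{..<r}"]) auto
        have pS: "p \<in> S" using False pr pB by (auto simp: S_def)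
        define r' where "r' = Max S"
        have r'S: "r' \<in> S" using finS pS Max_in unfolding r'_def by blast
        have r'max: "s \<le> r'" if "s \<in> S" for s using finS that by (simp add: r'_def)
        have gap: "\<forall>s. r' < s \<and> s < r \<longrightarrow> win u s N \<noteq> B"
        proof (intro allI impI)
          fix s assume "r' < s \<and> s < r"
          moreover have "p \<le> r'" using r'S by (simp add: S_def)
          ultimately show "win u s N \<noteq> B" using r'max[of s] by (auto simp: S_def)
        qed
        have "u (r' + N) = e" using less.IH[of r'] r'S by (auto simp: S_def)
        moreover have "u (r' + N) = u (r - 1)"
          by (rule ret_sym[OF RS N_def[symmetric] pal]) (use r'S gap rB in \<open>auto simp: S_def\<close>)
        ultimately show ?thesis by simp
      qed
      then show "u (r - 1) = e \<and> u (r + N) = e" using helper[OF rB r1] by simp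
    qed
  qed
  obtain i where i: "i \<ge> p" "win u i (length ((\<not> e) # B @ [\<not> e])) = (\<not> e) # B @ [\<not> e]"
    using recurrent[OF nBn, of p] by blast
  then have iw: "win u i (Suc (Suc N)) = (\<not> e) # B @ [\<not> e]" by (simp add: N_def)
  have "u i = (\<not> e)" "win u (Suc i) N = B" using win_decomp_eq[OF iw] N_def by auto
  moreover have "p \<le> Suc i" using i by simp
  ultimately show False using claim[of "Suc i"] by simp
qed

end

context sturm begin

lemma rev_lang_aux: "length v = n \<Longrightarrow> v \<in> lang u \<Longrightarrow> rev v \<in> lang u"
proof (induction n arbitrary: v rule: less_induct)
  case (less n)
  show ?case
  proof (cases "n \<le> 1")
    case True
    then have "rev v = v" using less.prems(1)
      by (cases v) auto
    then show ?thesis using less.prems by simp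
  next
    case False
    then obtain c v' where v: "v = c # v'" "v' \<noteq> []" using less.prems(1)
      by (cases v) auto
    then obtain w d where v'w: "v' = w @ [d]" by (metis rev_exhaust)
    have vv: "v = c # w @ [d]" using v v'w by simp
    have lw: "length w < n" "Suc (length w) < n" using less.prems(1) vv False by auto
    have IH: "x \<in> lang u \<Longrightarrow> length x < n \<Longrightarrow> rev x \<in> lang u" for x
      using less.IH by blast
    have cw: "c # w \<in> lang u" using less.prems(2) vv lang_append_right[of "c # w" "[d]"] by simp
    have wd: "w @ [d] \<in> lang u" using less.prems(2) vv lang_Cons by simp
    have h1: "rev w @ [c] \<in> lang u" using IH[OF cw] lw by simp
    have h2: "d # rev w \<in> lang u" using IH[OF wd] lw by simp
    have goal: "rev v = d # rev w @ [c]" using vv by simp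
    show ?thesis
    proof (cases "right_special u (rev w)")
      case False
      obtain e where e: "(d # rev w) @ [e] \<in> lang u" using lang_ext_right[OF h2] by blast
      then have "rev w @ [e] \<in> lang u" using lang_Cons by simp
      then have "e = c" using False h1 unfolding right_special_def by (cases e; cases c) auto
      then show ?thesis using e goal by simp
    next
      case RS: True
      show ?thesis
      proof (cases "left_special u (rev w)")
        case False
        obtain e where e: "e # rev w @ [c] \<in> lang u" using lang_ext_left[OF h1] by blast
        then have "e # rev w \<in> lang u" using lang_append_right[of "e # rev w" "[c]"] by simp
        then have "e = d" using False h2 unfolding left_special_def by (cases e; cases d) auto
        then show ?thesis using e goal by simp
      next
        case LS: True
        have RSw: "right_special u w"
        proof -
          have "rev (b # rev w) \<in> lang u" for b
          proof -
            have "b # rev w \<in> lang u" using LS unfolding left_special_def by (cases b) auto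
            then show ?thesis using IH[of "b # rev w"] lw by simp
          qed
          then show ?thesis unfolding right_special_def by simp
        qed
        have LSw: "left_special u w"
        proof -
          have "rev (rev w @ [b]) \<in> lang u" for b
          proof -
            have "rev w @ [b] \<in> lang u" using RS unfolding right_special_def by (cases b) auto
            then show ?thesis using IH[of "rev w @ [b]"] lw by simp
          qed
          then show ?thesis unfolding left_special_def by simp
        qed
        have pal: "rev w = w" using L_unique[OF LS] L_unique[OF LSw] by simp
        show ?thesis
        proof (cases "c = d")
          case True then show ?thesis using less.prems(2) vv goal pal by simp
        next
          case False
          then have "c = (\<not> d)" by auto
          then show ?thesis using mixed[OF LSw RSw pal, of d] goal pal by simp
        qed
      qed
    qed
  qed
qed

lemma rev_lang: "v \<in> lang u \<Longrightarrow> rev v \<in> lang u"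
  using rev_lang_aux by blast

lemma pal_bisp: "right_special u (L u n) \<Longrightarrow> rev (L u n) = L u n"
proof -
  assume RS: "right_special u (L u n)"
  have "left_special u (rev (L u n))"
    using RS rev_lang unfolding right_special_def left_special_def by fastforce
  then show ?thesis using L_unique by fastforce
qed

lemma key_letter:
  assumes "right_special u (L u n)" "right_special u (x # L u n)"
  shows "x = lsym u (Suc n)"
proof -
  define l where "l = lsym u (Suc n)"
  have a: "l # L u n @ [l] \<in> lang u" using L_Cons_lang[of l "Suc n"] by (simp add: L_Suc l_def)
  have b: "l # L u n @ [\<not> l] \<in> lang u"
    by (rule mixed[OF L_LS assms(1) pal_bisp[OF assms(1)]])
  have "right_special u (l # L u n)" using a b unfolding right_special_def by (cases l) auto
  then have "x # L u n = l # L u n" using RS_unique assms(2) by fastforce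
  then show ?thesis by (simp add: l_def)
qed

end

lemma Xplus_iff: "c \<in> Xplus u \<longleftrightarrow> (\<forall>i n. win c i n \<in> lang u)"
  by (simp add: Xplus_def win_def)

lemma win_shift_fun: "win (\<lambda>t. c (i + t)) j n = win c (i + j) n"
  by (rule nth_equalityI) (auto simp: add.assoc)

lemma Xplus_shift: "c \<in> Xplus u \<Longrightarrow> (\<lambda>t. c (i + t)) \<in> Xplus u"
  by (simp add: Xplus_iff win_shift_fun)

lemma u_Xplus_shift: "(\<lambda>t. u (i + t)) \<in> Xplus u"
  by (simp add: Xplus_iff win_shift_fun)

lemma take_win: "k \<le> n \<Longrightarrow> take k (win c i n) = win c i k"
  by (rule nth_equalityI) auto

lemma drop_win: "drop k (win c 0 (k + n)) = win c k n"
  by (rule nth_equalityI) auto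

lemma Xplus_prefix: "(\<And>n. win c 0 n \<in> lang u) \<Longrightarrow> c \<in> Xplus u"
  unfolding Xplus_iff by (metis drop_win lang_drop)

lemma Xtilde_win:
  assumes "y \<in> Xtilde u" "\<forall>k<length w. y (p + int k) = w ! k"
  shows "w \<in> lang u"
proof -
  have "(\<lambda>k. y (p + int k)) \<in> Xplus u" using assms(1) by (simp add: Xtilde_def)
  then have "win (\<lambda>k. y (p + int k)) 0 (length w) \<in> lang u" by (simp add: Xplus_iff)
  moreover have "win (\<lambda>k. y (p + int k)) 0 (length w) = w"
    by (rule win_eqI) (use assms(2) in auto)
  ultimately show ?thesis by simp
qed

primrec bext :: "(nat \<Rightarrow> bool) \<Rightarrow> (nat \<Rightarrow> bool) \<Rightarrow> nat \<Rightarrow> nat \<Rightarrow> bool" where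
  "bext u c 0 = c"
| "bext u c (Suc k) = (SOME d. d \<in> Xplus u \<and> (\<forall>i. d (Suc i) = bext u c k i))"

lemma fol_mono: "w \<noteq> [] \<Longrightarrow> fol u w \<subseteq> fol u (tl w)"
proof
  fix b assume w: "w \<noteq> []" and "b \<in> fol u w"
  then obtain x where x: "b \<in> Xplus u" "x \<in> Xtilde u"
    "\<forall>k < length w. x (int k - int (length w) + 1) = w ! k" "\<forall>i. b i = x (int i)"
    by (auto simp: fol_def)
  have "\<forall>k < length (tl w). x (int k - int (length (tl w)) + 1) = tl w ! k"
  proof (intro allI impI)
    fix k assume k: "k < length (tl w)"
    define z where "z = int k - int (length (tl w)) + 1"
    have z: "z = int (Suc k) - int (length w) + 1" using w unfolding z_def by (cases w) auto
    have "Suc k < length w" using k by simp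
    then have "x z = w ! Suc k" using x(3) z by metis
    then show "x (int k - int (length (tl w)) + 1) = tl w ! k" using w unfolding z_def by (cases w) auto
  qed
  then show "b \<in> fol u (tl w)" using x by (auto simp: fol_def)
qed

context sturm begin

lemma back_ext:
  assumes "c \<in> Xplus u"
  shows "\<exists>a. case_nat a c \<in> Xplus u"
proof -
  have pre: "win c 0 N \<in> lang u" for N using assms by (simp add: Xplus_iff)
  have take_pre: "b # win c 0 N \<in> lang u" if "b # win c 0 N' \<in> lang u" "N \<le> N'" for b N N'
  proof -
    have "take (Suc N) (b # win c 0 N') = b # win c 0 N" using that(2) by (simp add: take_win)
    then show ?thesis using lang_take[OF that(1), of "Suc N"] by simp
  qed
  obtain a where a: "\<forall>N. a # win c 0 N \<in> lang u"
  proof (cases "\<forall>N. False # win c 0 N \<in> lang u")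
    case True then show ?thesis using that by blast
  next
    case False
    then obtain N0 where N0: "False # win c 0 N0 \<notin> lang u" by blast
    have "True # win c 0 N \<in> lang u" for N
    proof -
      obtain b where b: "b # win c 0 (max N N0) \<in> lang u" using lang_ext_left[OF pre] by blast
      have "b \<noteq> False" using take_pre[OF b, of N0] N0 by (cases b) auto
      then show ?thesis using take_pre[OF b, of N] by simp
    qed
    then show ?thesis using that by blast
  qed
  have "win (case_nat a c) 0 n \<in> lang u" for n
  proof (cases n)
    case 0 then show ?thesis by (simp add: win_def)
  next
    case (Suc N)
    have "win (case_nat a c) 0 (Suc N) = a # win c 0 N"
      by (rule nth_equalityI) (auto simp: nth_Cons split: nat.split)
    then show ?thesis using a Suc by simp
  qed
  then show ?thesis using Xplus_prefix by blast
qed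

lemma bext_step:
  assumes "bext u c k \<in> Xplus u"
  shows "bext u c (Suc k) \<in> Xplus u \<and> (\<forall>i. bext u c (Suc k) (Suc i) = bext u c k i)"
proof -
  obtain a where a: "case_nat a (bext u c k) \<in> Xplus u" using back_ext[OF assms] by blast
  have ex: "\<exists>d. d \<in> Xplus u \<and> (\<forall>i. d (Suc i) = bext u c k i)"
    using a by (intro exI[of _ "case_nat a (bext u c k)"]) simp
  show ?thesis unfolding bext.simps(2) by (rule someI_ex[OF ex])
qed

lemma bext_X: "c \<in> Xplus u \<Longrightarrow> bext u c k \<in> Xplus u"
proof (induction k)
  case 0 then show ?case by simp
next
  case (Suc k) then show ?case using bext_step by blast
qed

lemma bext_Xplus: "c \<in> Xplus u \<Longrightarrow> bext u c k \<in> Xplus u \<and> (\<forall>i. bext u c (Suc k) (Suc i) = bext u c k i)"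
  using bext_X bext_step by blast

lemma two_sided:
  assumes "c \<in> Xplus u"
  shows "\<exists>y \<in> Xtilde u. \<forall>t. y (int t) = c t"
proof -
  define y where "y z = (if 0 \<le> z then c (nat z) else bext u c (nat (- z)) 0)" for z
  have key: "y (int i - int j) = bext u c j i" for i j
  proof (induction j arbitrary: i)
    case 0 then show ?case by (simp add: y_def)
  next
    case (Suc j)
    show ?case
    proof (cases i)
      case 0
      have neg: "y z = bext u c (nat (- z)) 0" if "\<not> 0 \<le> z" for z using that by (simp add: y_def)
      have n: "nat (- (int i - int (Suc j))) = Suc j" using 0 by simp
      have "\<not> 0 \<le> int i - int (Suc j)" using 0 by simp
      then have "y (int i - int (Suc j)) = bext u c (Suc j) 0" using neg n by metis
      then show ?thesis using 0 by simp
    next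
      case (Suc i')
      have "y (int i - int (Suc j)) = y (int i' - int j)" using Suc by simp
      also have "\<dots> = bext u c j i'" by (rule Suc.IH)
      also have "\<dots> = bext u c (Suc j) i" using bext_Xplus[OF assms, of j] Suc by simp
      finally show ?thesis .
    qed
  qed
  have "(\<lambda>k. y (p + int k)) \<in> Xplus u" for p
  proof (cases "0 \<le> p")
    case True
    have "(\<lambda>k. y (p + int k)) = (\<lambda>k. c (nat p + k))"
    proof
      fix k
      have nn: "0 \<le> p + int k" using True by simp
      have "nat (p + int k) = nat p + k" using True by (simp add: nat_add_distrib)
      then show "y (p + int k) = c (nat p + k)" using nn unfolding y_def by simp
    qed
    then show ?thesis using Xplus_shift[OF assms] by simp
  next
    case False
    have "(\<lambda>k. y (p + int k)) = bext u c (nat (- p))"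
    proof
      fix k
      have "p + int k = int k - int (nat (- p))" using False by simp
      then show "y (p + int k) = bext u c (nat (- p)) k" by (metis key)
    qed
    then show ?thesis using bext_Xplus[OF assms] by simp
  qed
  then have "y \<in> Xtilde u" by (simp add: Xtilde_def)
  moreover have "\<forall>t. y (int t) = c t" by (simp add: y_def)
  ultimately show ?thesis by blast
qed

lemma two_sided_shift:
  assumes "c \<in> Xplus u"
  shows "\<exists>y \<in> Xtilde u. \<forall>t. y (int t - int s) = c t"
proof -
  obtain y where y: "y \<in> Xtilde u" "\<forall>t. y (int t) = c t" using two_sided[OF assms] by blast
  define y' where "y' z = y (z + int s)" for z
  have "(\<lambda>k. y' (p + int k)) \<in> Xplus u" for p
  proof -
    have "(\<lambda>k. y' (p + int k)) = (\<lambda>k. y ((p + int s) + int k))"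
      unfolding y'_def by (simp add: algebra_simps)
    moreover have "(\<lambda>k. y ((p + int s) + int k)) \<in> Xplus u" using y(1) unfolding Xtilde_def by blast
    ultimately show ?thesis by simp
  qed
  then have "y' \<in> Xtilde u" by (simp add: Xtilde_def)
  moreover have "\<forall>t. y' (int t - int s) = c t" using y(2) by (simp add: y'_def)
  ultimately show ?thesis by blast
qed

lemma fol_nonLS:
  assumes "a # t \<in> lang u" "\<not> left_special u t"
  shows "fol u t \<subseteq> fol u (a # t)"
proof
  fix b assume "b \<in> fol u t"
  then obtain y where y: "b \<in> Xplus u" "y \<in> Xtilde u"
    "\<forall>k < length t. y (int k - int (length t) + 1) = t ! k" "\<forall>i. b i = y (int i)"
    by (auto simp: fol_def)
  define n where "n = length t"
  have "\<forall>k<length (y (- int n) # t). y (- int n + int k) = (y (- int n) # t) ! k"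
  proof (intro allI impI)
    fix k assume "k < length (y (- int n) # t)"
    then show "y (- int n + int k) = (y (- int n) # t) ! k"
    proof (cases k)
      case (Suc k')
      then have "k' < length t" using \<open>k < _\<close> by simp
      then have "y (int k' - int n + 1) = t ! k'" using y(3) n_def by simp
      moreover have "- int n + int k = int k' - int n + 1" using Suc by simp
      ultimately show ?thesis using Suc by (metis nth_Cons_Suc)
    qed simp
  qed
  then have "y (- int n) # t \<in> lang u" by (rule Xtilde_win[OF y(2)])
  then have ya: "y (- int n) = a" using assms unfolding left_special_def
    by (cases a; cases "y (- int n)") auto
  have "\<forall>k < length (a # t). y (int k - int (length (a # t)) + 1) = (a # t) ! k"
  proof (intro allI impI)
    fix k assume k: "k < length (a # t)"
    show "y (int k - int (length (a # t)) + 1) = (a # t) ! k"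
    proof (cases k)
      case 0 then show ?thesis using ya by (simp add: n_def)
    next
      case (Suc k')
      then show ?thesis using y(3) k by simp
    qed
  qed
  then show "b \<in> fol u (a # t)" using y by (auto simp: fol_def)
qed

lemma sep_word: "\<exists>q. x # L u n @ q \<notin> lang u \<and> (\<not> x) # L u n @ q \<in> lang u"
proof (rule ccontr)
  assume "\<not> ?thesis"
  then have H: "(\<not> x) # L u n @ q \<in> lang u \<Longrightarrow> x # L u n @ q \<in> lang u" for q by blast
  have occ: "win u (Suc j) (n + t) = L u (n + t)" if j: "win u j (Suc n) = (\<not> x) # L u n" for j t
  proof -
    define q0 where "q0 = win u (Suc j) (n + t)"
    have uj: "u j = (\<not> x)" and wj: "win u (Suc j) n = L u n" using j by (simp_all add: win_Suc_Cons)
    have "(\<not> x) # q0 = win u j (Suc (n + t))" using uj by (simp add: win_Suc_Cons q0_def)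
    then have l1: "(\<not> x) # q0 \<in> lang u" by (metis win_in_lang)
    have "take n q0 = L u n" using wj by (simp add: q0_def take_win)
    then have q0s: "q0 = L u n @ drop n q0" by (metis append_take_drop_id)
    then have "x # q0 \<in> lang u" using H[of "drop n q0"] l1 by simp
    then have "left_special u q0" using l1 unfolding left_special_def by (cases x) auto
    then show ?thesis using L_unique by (metis q0_def length_win)
  qed
  obtain i where i: "win u i (Suc n) = (\<not> x) # L u n"
    using L_Cons_lang[of "\<not> x" n] lang_iff by (metis length_Cons length_L)
  obtain i' where i': "i' \<ge> Suc i" "win u i' (Suc n) = (\<not> x) # L u n"
    using recurrent[OF L_Cons_lang[of "\<not> x" n], of "Suc i"] by auto
  have "u (Suc i + s) = u (Suc i' + s)" for s
  proof -
    have "u (Suc i + s) = win u (Suc i) (n + Suc s) ! s" by simp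
    also have "\<dots> = L u (n + Suc s) ! s" using occ[OF i] by metis
    also have "\<dots> = win u (Suc i') (n + Suc s) ! s" using occ[OF i'(2)] by metis
    also have "\<dots> = u (Suc i' + s)" by simp
    finally show ?thesis .
  qed
  moreover have "Suc i < Suc i'" using i' by simp
  ultimately show False using not_periodic by blast
qed

lemma fol_strict: "fol u (x # L u n) \<noteq> fol u (L u n)"
proof
  assume eq: "fol u (x # L u n) = fol u (L u n)"
  obtain q where q: "x # L u n @ q \<notin> lang u" "(\<not> x) # L u n @ q \<in> lang u"
    using sep_word by blast
  define W where "W = (\<not> x) # L u n @ q"
  obtain i where i: "win u i (length W) = W" using q(2) lang_iff W_def by metis
  have ui: "u (i + k) = W ! k" if "k < length W" for k using i that by (metis nth_win)
  obtain y where y: "y \<in> Xtilde u" "\<forall>t. y (int t - int n) = u (i + t)"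
    using two_sided_shift[OF u_Xplus_shift[where i=i], of n] by auto
  define b where "b t = u (i + n + t)" for t
  have yb: "y (int t) = b t" for t
    using y(2)[rule_format, of "t + n"] by (simp add: b_def add.commute add.left_commute)
  have bX: "b \<in> Xplus u" unfolding b_def using u_Xplus_shift[where i="i + n"] by simp
  have "b \<in> fol u (L u n)"
  proof -
    have "\<forall>k<length (L u n). y (int k - int (length (L u n)) + 1) = L u n ! k"
    proof (intro allI impI)
      fix k assume k: "k < length (L u n)"
      have "int k - int (length (L u n)) + 1 = int (Suc k) - int n" by simp
      then have "y (int k - int (length (L u n)) + 1) = u (i + Suc k)" using y(2) by metis
      also have "\<dots> = W ! Suc k" using k by (intro ui) (simp add: W_def)
      also have "\<dots> = L u n ! k" using k by (simp add: W_def nth_append)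
      finally show "y (int k - int (length (L u n)) + 1) = L u n ! k" .
    qed
    then show ?thesis using y(1) bX yb by (auto simp: fol_def)
  qed
  then have "b \<in> fol u (x # L u n)" using eq by simp
  then obtain y' where y': "y' \<in> Xtilde u"
    "\<forall>k < length (x # L u n). y' (int k - int (length (x # L u n)) + 1) = (x # L u n) ! k"
    "\<forall>i. b i = y' (int i)"
    by (auto simp: fol_def)
  define V where "V = x # L u n @ q"
  have "\<forall>k<length V. y' (- int n + int k) = V ! k"
  proof (intro allI impI)
    fix k assume k: "k < length V"
    show "y' (- int n + int k) = V ! k"
    proof (cases "k \<le> n")
      case True
      then have "k < length (x # L u n)" by simp
      then have e1: "y' (int k - int (length (x # L u n)) + 1) = (x # L u n) ! k" using y'(2) by blast
      have e2: "int k - int (length (x # L u n)) + 1 = - int n + int k" by simp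
      have e3: "(x # L u n) ! k = V ! k" unfolding V_def using nth_append[of "x # L u n" q k] True by simp
      show ?thesis using e1 e2 e3 by metis
    next
      case False
      have e1: "- int n + int k = int (k - n)" using False by simp
      have e2: "y' (int (k - n)) = b (k - n)" using y'(3) by metis
      have e3: "b (k - n) = u (i + k)" using False unfolding b_def by simp
      have "k < length W" using k by (simp add: W_def V_def)
      then have e4: "u (i + k) = W ! k" by (rule ui)
      have e5: "W ! k = V ! k" using False by (cases k) (auto simp: W_def V_def)
      show ?thesis by (simp only: e1 e2 e3 e4 e5)
    qed
  qed
  then have "V \<in> lang u" by (rule Xtilde_win[OF y'(1)])
  then show False using q(1) by (simp add: V_def)
qed

lemma significant_iff:
  "significant u w \<longleftrightarrow> w \<in> lang u \<and> (length w = 1 \<or> (\<exists>x n. n \<ge> 1 \<and> w = x # L u n))"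
proof
  assume s: "significant u w"
  then have wl: "w \<in> lang u" by (simp add: significant_def)
  show "w \<in> lang u \<and> (length w = 1 \<or> (\<exists>x n. n \<ge> 1 \<and> w = x # L u n))"
  proof (cases "length w = 1")
    case False
    have l2: "length w \<ge> 2" using s False by (auto simp: significant_def)
    have sub: "fol u w \<subset> fol u (tl w)" using s False by (auto simp: significant_def)
    obtain a t where w0: "w = a # t" using l2 by (cases w) auto
    then have w: "w = a # t" "t \<noteq> []" using l2 by auto
    have "left_special u t"
    proof (rule ccontr)
      assume "\<not> left_special u t"
      then have "fol u t \<subseteq> fol u (a # t)" using fol_nonLS wl w by blast
      then show False using sub w by auto
    qed
    then have "t = L u (length t)" using L_unique by simp
    then show ?thesis using wl w by (metis One_nat_def Suc_leI length_greater_0_conv)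
  qed (use wl in simp)
next
  assume r: "w \<in> lang u \<and> (length w = 1 \<or> (\<exists>x n. n \<ge> 1 \<and> w = x # L u n))"
  show "significant u w"
  proof (cases "length w = 1")
    case False
    then obtain x n where n: "n \<ge> 1" "w = x # L u n" using r by blast
    have "fol u w \<subseteq> fol u (tl w)" using fol_mono[of "x # L u n" u] n by simp
    moreover have "fol u w \<noteq> fol u (tl w)" using fol_strict[of x n] n(2) by simp
    ultimately show ?thesis using r n by (auto simp: significant_def)
  qed (use r in \<open>simp add: significant_def\<close>)
qed

end

lemma Least_shift:
  fixes P :: "nat \<Rightarrow> bool"
  assumes "\<forall>k<a. \<not> P k" "P (a + m)"
  shows "(LEAST k. P k) = a + (LEAST k. P (a + k))"
proof (rule Least_equality)
  show "P (a + (LEAST k. P (a + k)))" using assms(2) by (rule LeastI)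
next
  fix y assume Py: "P y"
  show "a + (LEAST k. P (a + k)) \<le> y"
  proof (cases "y < a")
    case True then show ?thesis using assms(1) Py by blast
  next
    case False
    then have "P (a + (y - a))" using Py by simp
    then have "(LEAST k. P (a + k)) \<le> y - a" by (rule Least_le)
    then show ?thesis using False by simp
  qed
qed

lemma sig_self: "significant u w \<Longrightarrow> sig u w = w"
  unfolding sig_def by (simp add: Least_eq_0)

lemma sig_suffix:
  assumes "v = p @ v'" "\<forall>k<length p. \<not> significant u (drop k v)" "significant u (drop m v')"
  shows "sig u v = sig u v'"
proof -
  have dr: "drop (length p + k) v = drop k v'" for k using assms(1) by simp
  have "(LEAST k. significant u (drop k v)) = length p + (LEAST k. significant u (drop (length p + k) v))"
    by (rule Least_shift) (use assms(2,3) dr in auto)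
  then show ?thesis unfolding sig_def using dr by (simp add: dr)
qed

context sturm begin

lemma significant_single[simp]: "significant u [b]"
  by (simp add: significant_def)

lemma significant_L: "n \<ge> 1 \<Longrightarrow> significant u (x # L u n)"
  using significant_iff L_Cons_lang by blast

lemma significant_long: "significant u w \<Longrightarrow> length w \<noteq> 1 \<Longrightarrow> \<exists>x n. n \<ge> 1 \<and> w = x # L u n"
  using significant_iff by blast

lemma L_1: "L u 1 = [lsym u 1]"
  using L_Suc[of 0] by simp

lemma RS_Cons_ex: "right_special u (L u m) \<Longrightarrow> \<exists>w. right_special u (w # L u m)"
proof -
  assume RS: "right_special u (L u m)"
  obtain v where v: "length v = Suc m" "right_special u v" using RS_ex by blast
  then obtain w v' where vv: "v = w # v'" by (cases v) auto
  then have "right_special u v'" using v RS_suffix[of "[w]" v'] by simp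
  then have "v' = L u m" using RS_unique RS v vv by simp
  then show ?thesis using v vv by blast
qed

lemma RS_L_of_Cons: "right_special u (x # L u n) \<Longrightarrow> right_special u (L u n)"
  using RS_suffix[of "[x]"] by simp

lemma prev_bisp:
  assumes "right_special u (L u n)" "n \<ge> 1"
  shows "\<exists>m<n. right_special u (L u m) \<and> (\<forall>j. m < j \<and> j < n \<longrightarrow> \<not> right_special u (L u j))"
proof -
  define S where "S = {j. j < n \<and> right_special u (L u j)}"
  have fin: "finite S" unfolding S_def by simp
  have "0 \<in> S" using assms(2) RS_Nil by (simp add: S_def)
  then have mS: "Max S \<in> S" using fin Max_in by blast
  have "\<not> right_special u (L u j)" if "Max S < j" "j < n" for j
  proof
    assume "right_special u (L u j)"
    then have "j \<in> S" using that by (simp add: S_def)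
    then have "j \<le> Max S" using fin Max_ge by blast
    then show False using that by simp
  qed
  then have "\<forall>j. Max S < j \<and> j < n \<longrightarrow> \<not> right_special u (L u j)" by blast
  then show ?thesis using mS S_def by blast
qed

lemma RS_suffix_L:
  assumes "right_special u (x # L u n)" "right_special u (w # L u m)" "m \<le> n"
  shows "drop (n - m) (x # L u n) = w # L u m"
proof -
  have "right_special u (drop (n - m) (x # L u n))"
    using RS_suffix[of "take (n - m) (x # L u n)"] assms(1) by simp
  moreover have "length (drop (n - m) (x # L u n)) = length (w # L u m)" using assms(3) by simp
  ultimately show ?thesis using RS_unique assms(2) by blast
qed

lemma sig_reduce:
  assumes RSx: "right_special u (x # L u n)" and RSw: "right_special u (w # L u m)" and mn: "m < n"
    and gap: "\<forall>j. m < j \<and> j < n \<longrightarrow> \<not> right_special u (L u j)"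
    and b: "b \<noteq> lsym u (Suc n)"
  shows "sig u (x # L u n @ [b]) = sig u (w # L u m @ [b])"
proof -
  define p where "p = take (n - m) (x # L u n)"
  have suf: "drop (n - m) (x # L u n) = w # L u m" using RS_suffix_L[OF RSx RSw] mn by simp
  have v: "x # L u n @ [b] = p @ (w # L u m @ [b])"
  proof -
    have "x # L u n = p @ (w # L u m)" using suf p_def by (metis append_take_drop_id)
    then show ?thesis by (metis append_Cons append_assoc)
  qed
  have lp: "length p = n - m" using mn by (simp add: p_def)
  have RSn: "right_special u (L u n)" using RSx RS_L_of_Cons by blast
  have nsig: "\<not> significant u (drop k (x # L u n @ [b]))" if k: "k < length p" for k
  proof
    assume s: "significant u (drop k (x # L u n @ [b]))"
    have kn: "k < n - m" using k lp by simp
    have len: "length (drop k (x # L u n @ [b])) = n + 2 - k" by simp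
    then have "length (drop k (x # L u n @ [b])) \<noteq> 1" using kn by simp
    then obtain z j where zj: "j \<ge> 1" "drop k (x # L u n @ [b]) = z # L u j"
      using significant_long[OF s] by blast
    have "length (z # L u j) = n + 2 - k" using zj(2) len by metis
    then have jv: "j = n + 1 - k" by simp
    have "tl (drop k (x # L u n @ [b])) = drop k (L u n) @ [b]"
      using kn by (simp add: drop_Suc[symmetric] tl_drop)
    then have e: "L u j = drop k (L u n) @ [b]" using zj by simp
    obtain j' where j': "j = Suc j'" using zj(1) by (cases j) auto
    have "L u j' @ [lsym u j] = drop k (L u n) @ [b]" using e L_Suc[of j'] j' by simp
    then have e1: "L u j' = drop k (L u n)" and e2: "lsym u j = b" by simp_all
    have "right_special u (drop k (L u n))"
      using RS_suffix[of "take k (L u n)" "drop k (L u n)"] RSn by simp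
    then have RSj: "right_special u (L u j')" using e1 by simp
    have j'v: "j' = n - k" using jv j' kn by simp
    show False
    proof (cases "k = 0")
      case True
      then have "j = Suc n" using j' j'v by simp
      then show False using e2 b by simp
    next
      case False
      then have "m < j'" "j' < n" using j'v kn by auto
      then show False using gap RSj by blast
    qed
  qed
  have "significant u (drop (Suc m) (w # L u m @ [b]))" by simp
  moreover have "\<forall>k<length p. \<not> significant u (drop k (x # L u n @ [b]))" using nsig by blast
  ultimately show ?thesis using sig_suffix[OF v] by blast
qed

lemma sig_pair: "[c, d] \<in> lang u \<Longrightarrow> sig u [c, d] = (if d = lsym u 1 then [c, d] else [d])"
proof -
  assume cd: "[c, d] \<in> lang u"
  have iff: "significant u [c, d] \<longleftrightarrow> d = lsym u 1"
  proof
    assume "significant u [c, d]"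
    then obtain x n where "n \<ge> 1" "[c, d] = x # L u n" using significant_long by fastforce
    then show "d = lsym u 1" using L_1 by (metis length_Cons length_L list.inject list.size(3) One_nat_def)
  next
    assume "d = lsym u 1"
    then have "[c, d] = c # L u 1" using L_1 by simp
    then show "significant u [c, d]" using significant_L by simp
  qed
  show ?thesis
  proof (cases "d = lsym u 1")
    case True then show ?thesis using iff sig_self by simp
  next
    case False
    have "sig u ([c] @ [d]) = sig u [d]"
      by (rule sig_suffix[of _ "[c]" "[d]" u 0]) (use False iff in auto)
    moreover have "sig u [d] = [d]" by (simp add: sig_self)
    ultimately show ?thesis using False by simp
  qed
qed

lemma first_letter:
  shows "right_special u [lsym u 1]" "[\<not> lsym u 1, \<not> lsym u 1] \<notin> lang u"
proof -
  obtain x where x: "right_special u (x # L u 0)" using RS_Cons_ex[of 0] RS_Nil by auto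
  then have "x = lsym u 1" using key_letter[of 0 x] RS_Nil by simp
  then show RS: "right_special u [lsym u 1]" using x by simp
  show "[\<not> lsym u 1, \<not> lsym u 1] \<notin> lang u"
  proof
    assume a: "[\<not> lsym u 1, \<not> lsym u 1] \<in> lang u"
    have "[\<not> lsym u 1, lsym u 1] \<in> lang u" using L_Cons_lang[of "\<not> lsym u 1" 1] L_1 by simp
    then have "right_special u [\<not> lsym u 1]" using a unfolding right_special_def
      by (cases "lsym u 1") auto
    then show False using RS RS_unique by fastforce
  qed
qed

end

lemma arrows_iff: "(a, c) \<in> HB_arrows u \<longleftrightarrow> significant u a \<and> (\<exists>b. a @ [b] \<in> lang u \<and> c = sig u (a @ [b]))"
  by (simp add: HB_arrows_def)

context sturm begin

lemma cons_elim:
  assumes "consecutive_rss u (w # L u m) (x # L u n)"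
  shows "m < n" "right_special u (w # L u m)" "right_special u (x # L u n)"
    "\<forall>j. m < j \<and> j < n \<longrightarrow> \<not> right_special u (L u j)"
proof -
  have len: "length (w # L u m) < length (x # L u n)"
    using assms unfolding consecutive_rss_def by blast
  then show "m < n" by simp
  show "right_special u (w # L u m)" "right_special u (x # L u n)"
    using assms unfolding consecutive_rss_def by blast+
  have ne: "\<not> (\<exists>z. right_special u z \<and> significant u z \<and>
            length (w # L u m) < length z \<and> length z < length (x # L u n))"
    using assms unfolding consecutive_rss_def by blast
  show "\<forall>j. m < j \<and> j < n \<longrightarrow> \<not> right_special u (L u j)"
  proof (intro allI impI notI)
    fix j assume j: "m < j \<and> j < n" and RS: "right_special u (L u j)"
    obtain y where y: "right_special u (y # L u j)" using RS_Cons_ex[OF RS] by blast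
    have "significant u (y # L u j)" using significant_L j by simp
    moreover have "length (w # L u m) < length (y # L u j)" "length (y # L u j) < length (x # L u n)"
      using j by simp_all
    ultimately show False using ne y by blast
  qed
qed

lemma cons_intro:
  assumes "right_special u (w # L u m)" "right_special u (x # L u n)" "m < n"
    "\<forall>j. m < j \<and> j < n \<longrightarrow> \<not> right_special u (L u j)"
  shows "consecutive_rss u (w # L u m) (x # L u n)"
proof -
  have sw: "significant u (w # L u m)"
  proof (cases "m = 0")
    case True then show ?thesis by simp
  next
    case False then show ?thesis using significant_L by simp
  qed
  have sx: "significant u (x # L u n)" using significant_L assms(3) by simp
  have ne: "\<not> (\<exists>z. right_special u z \<and> significant u z \<and> length (w # L u m) < length z \<and> length z < length (x # L u n))"
  proof
    assume "\<exists>z. right_special u z \<and> significant u z \<and> length (w # L u m) < length z \<and> length z < length (x # L u n)"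
    then obtain z where z: "right_special u z" "significant u z" "Suc m < length z" "length z < Suc n" by auto
    have "length z \<noteq> 1" using z(3) by simp
    then obtain y j where yj: "j \<ge> 1" "z = y # L u j" using significant_long[OF z(2)] by blast
    then have "m < j" "j < n" using z by auto
    moreover have "right_special u (L u j)" using z(1) yj RS_L_of_Cons by blast
    ultimately show False using assms(4) by blast
  qed
  have len: "length (w # L u m) < length (x # L u n)" using assms(3) by simp
  show ?thesis unfolding consecutive_rss_def using assms(1,2) sw sx len ne by blast
qed

lemma arrow_long:
  assumes n: "n \<ge> 1" and l: "x # L u n @ [b] \<in> lang u" and b: "b \<noteq> lsym u (Suc n)"
  shows "\<exists>m w. m < n \<and> consecutive_rss u (w # L u m) (x # L u n) \<and>
     (if x \<noteq> w then sig u (x # L u n @ [b]) = w # L u (m + 1)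
      else b \<noteq> lsym u (m + 1) \<and> sig u (x # L u n @ [b]) = sig u (w # L u m @ [b]))"
proof -
  have l2: "x # L u n @ [lsym u (Suc n)] \<in> lang u" using L_Cons_lang[of x "Suc n"] L_Suc[of n] by simp
  have RSx: "right_special u (x # L u n)" using l l2 b unfolding right_special_def
    by (cases b; cases "lsym u (Suc n)") auto
  have RSn: "right_special u (L u n)" using RSx RS_L_of_Cons by blast
  obtain m where m: "m < n" "right_special u (L u m)" "\<forall>j. m < j \<and> j < n \<longrightarrow> \<not> right_special u (L u j)"
    using prev_bisp[OF RSn n] by blast
  obtain w where RSw: "right_special u (w # L u m)" using RS_Cons_ex[OF m(2)] by blast
  have cons: "consecutive_rss u (w # L u m) (x # L u n)" using cons_intro[OF RSw RSx m(1) m(3)] .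
  have red: "sig u (x # L u n @ [b]) = sig u (w # L u m @ [b])" using sig_reduce[OF RSx RSw m(1) m(3) b] .
  have kx: "x = lsym u (Suc n)" using key_letter[OF RSn RSx] .
  have kw: "w = lsym u (Suc m)" using key_letter[OF m(2) RSw] .
  show ?thesis
  proof (cases "x = w")
    case True
    then have "b \<noteq> lsym u (m + 1)" using b kx kw by simp
    then show ?thesis using True m(1) cons red by auto
  next
    case False
    then have bw: "b = lsym u (Suc m)" using b kx kw by (cases b; cases x; cases w) auto
    have "sig u (w # L u m @ [b]) = w # L u (Suc m)"
      using sig_self[OF significant_L[of "Suc m" w]] bw L_Suc[of m] by simp
    then show ?thesis using False m(1) cons red by auto
  qed
qed

lemma arrow_cons:
  assumes c: "consecutive_rss u (w # L u m) (x # L u n)"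
  defines "b \<equiv> \<not> lsym u (Suc n)"
  shows "x # L u n @ [b] \<in> lang u"
    "x \<noteq> w \<Longrightarrow> sig u (x # L u n @ [b]) = w # L u (m + 1)"
    "x = w \<Longrightarrow> y \<noteq> lsym u (m + 1) \<Longrightarrow> sig u (x # L u n @ [b]) = sig u (w # L u m @ [y])"
proof -
  note ce = cons_elim[OF c]
  show "x # L u n @ [b] \<in> lang u" using ce(3) unfolding right_special_def b_def
    by (cases "lsym u (Suc n)") auto
  have RSn: "right_special u (L u n)" using ce(3) RS_L_of_Cons by blast
  have RSm: "right_special u (L u m)" using ce(2) RS_L_of_Cons by blast
  have red: "sig u (x # L u n @ [b]) = sig u (w # L u m @ [b])"
    using sig_reduce[OF ce(3) ce(2) ce(1) ce(4)] b_def by simp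
  have kx: "x = lsym u (Suc n)" using key_letter[OF RSn ce(3)] .
  have kw: "w = lsym u (Suc m)" using key_letter[OF RSm ce(2)] .
  show "sig u (x # L u n @ [b]) = w # L u (m + 1)" if "x \<noteq> w"
  proof -
    have bw: "b = lsym u (Suc m)" using that b_def kx kw by (cases x; cases w) auto
    have "sig u (w # L u m @ [b]) = w # L u (Suc m)"
      using sig_self[OF significant_L[of "Suc m" w]] bw L_Suc[of m] by simp
    then show ?thesis using red by simp
  qed
  show "sig u (x # L u n @ [b]) = sig u (w # L u m @ [y])" if "x = w" "y \<noteq> lsym u (m + 1)"
  proof -
    have "y = b" using that b_def kx kw by (cases y; cases x) auto
    then show ?thesis using red by simp
  qed
qed

lemma one_arrows:
  defines "a \<equiv> lsym u 1"
  shows "{(\<alpha>, \<beta>). (\<alpha>, \<beta>) \<in> HB_arrows u \<and> length \<alpha> = 1} = {([a], [a, a]), ([a], [\<not> a]), ([\<not> a], [\<not> a, a])}"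
proof -
  have RSa: "right_special u [a]" using first_letter(1) a_def by simp
  have nn: "[\<not> a, \<not> a] \<notin> lang u" using first_letter(2) a_def by simp
  have aa: "[a, a] \<in> lang u" "[a, \<not> a] \<in> lang u" using RSa unfolding right_special_def by (cases a; simp)+
  have na: "[\<not> a, a] \<in> lang u" using L_Cons_lang[of "\<not> a" 1] L_1 a_def by simp
  have sp: "[c, d] \<in> lang u \<Longrightarrow> sig u [c, d] = (if d = a then [c, d] else [d])" for c d
    using sig_pair a_def by simp
  show ?thesis
  proof (intro equalityI subsetI)
    fix p assume "p \<in> {(\<alpha>, \<beta>). (\<alpha>, \<beta>) \<in> HB_arrows u \<and> length \<alpha> = 1}"
    then obtain \<alpha> \<beta> where p: "p = (\<alpha>, \<beta>)" "(\<alpha>, \<beta>) \<in> HB_arrows u" "length \<alpha> = 1" by blast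
    then obtain c where c: "\<alpha> = [c]" by (cases \<alpha>) auto
    obtain b where b: "[c, b] \<in> lang u" "\<beta> = sig u [c, b]" using p(2) c by (auto simp: arrows_iff)
    have be: "\<beta> = (if b = a then [c, b] else [b])" using sp[OF b(1)] b(2) by simp
    have "p = ([a], [a, a]) \<or> p = ([a], [\<not> a]) \<or> p = ([\<not> a], [\<not> a, a])"
    proof (cases "c = a")
      case True
      show ?thesis
      proof (cases "b = a")
        case True
        then show ?thesis using \<open>c = a\<close> be p(1) c by simp
      next
        case False
        then have "b = (\<not> a)" by blast
        then show ?thesis using \<open>c = a\<close> be p(1) c False by simp
      qed
    next
      case False
      then have ca: "c = (\<not> a)" by blast
      have "b \<noteq> (\<not> a)" using b(1) nn ca by blast
      then have "b = a" by blast
      then show ?thesis using ca be p(1) c by simp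
    qed
    then show "p \<in> {([a], [a, a]), ([a], [\<not> a]), ([\<not> a], [\<not> a, a])}" by blast
  next
    fix p assume "p \<in> {([a], [a, a]), ([a], [\<not> a]), ([\<not> a], [\<not> a, a])}"
    then show "p \<in> {(\<alpha>, \<beta>). (\<alpha>, \<beta>) \<in> HB_arrows u \<and> length \<alpha> = 1}"
    proof (elim insertE)
      assume "p = ([a], [a, a])"
      moreover have "([a], [a, a]) \<in> HB_arrows u" unfolding arrows_iff
        using aa sp[OF aa(1)] by (intro conjI significant_single exI[of _ a]) auto
      ultimately show ?thesis by simp
    next
      assume "p = ([a], [\<not> a])"
      moreover have "([a], [\<not> a]) \<in> HB_arrows u" unfolding arrows_iff
        using aa sp[OF aa(2)] by (intro conjI significant_single exI[of _ "\<not> a"]) auto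
      ultimately show ?thesis by simp
    next
      assume "p = ([\<not> a], [\<not> a, a])"
      moreover have "([\<not> a], [\<not> a, a]) \<in> HB_arrows u" unfolding arrows_iff
        using na sp[OF na] by (intro conjI significant_single exI[of _ a]) auto
      ultimately show ?thesis by simp
    qed simp
  qed
qed

end

theorem theorem4p13:
  fixes u :: "nat \<Rightarrow> bool"
  assumes "sturmian u"
  shows "HB_vertices u = {[False], [True]} \<union> {x # L u n | x n. n \<ge> 1}
    \<and> HB_arrows u =
        (if lsym u 1 = False
         then {([False], [True]), ([False], [False, False]), ([True], [True, False])}
         else {([True], [False]), ([True], [True, True]), ([False], [False, True])})
      \<union> {(x # L u n, x # L u (n + 1)) | x n. n \<ge> 1}
      \<union> {(x # L u n, w # L u (m + 1)) | x w n m.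
            m < n \<and> consecutive_rss u (w # L u m) (x # L u n) \<and> x \<noteq> w}
      \<union> {(x # L u n, sig u (w # L u m @ [y])) | x w n m y.
            m < n \<and> consecutive_rss u (w # L u m) (x # L u n) \<and> x = w
            \<and> y \<noteq> lsym u (m + 1)}"
proof -
  interpret sturm u by unfold_locales (rule assms)
  define a where "a = lsym u 1"
  define S1 where "S1 = (if lsym u 1 = False
         then {([False], [True]), ([False], [False, False]), ([True], [True, False])}
         else {([True], [False]), ([True], [True, True]), ([False], [False, True])})"
  define S2 where "S2 = {(x # L u n, x # L u (n + 1)) | x n. n \<ge> 1}"
  define S3 where "S3 = {(x # L u n, w # L u (m + 1)) | x w n m.
            m < n \<and> consecutive_rss u (w # L u m) (x # L u n) \<and> x \<noteq> w}"
  define S4 where "S4 = {(x # L u n, sig u (w # L u m @ [y])) | x w n m y.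
            m < n \<and> consecutive_rss u (w # L u m) (x # L u n) \<and> x = w
            \<and> y \<noteq> lsym u (m + 1)}"
  have S1e: "S1 = {([a], [a, a]), ([a], [\<not> a]), ([\<not> a], [\<not> a, a])}"
    unfolding S1_def a_def by (cases "lsym u 1") auto
  have one: "{(\<alpha>, \<beta>). (\<alpha>, \<beta>) \<in> HB_arrows u \<and> length \<alpha> = 1} = S1"
    using one_arrows S1e a_def by simp
  have V: "HB_vertices u = {[False], [True]} \<union> {x # L u n | x n. n \<ge> 1}"
  proof (intro equalityI subsetI)
    fix w assume "w \<in> HB_vertices u"
    then have s: "significant u w" by (simp add: HB_vertices_def)
    show "w \<in> {[False], [True]} \<union> {x # L u n | x n. n \<ge> 1}"
    proof (cases "length w = 1")
      case True
      then obtain b where "w = [b]" by (cases w) auto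
      then show ?thesis by (cases b) auto
    next
      case False
      then show ?thesis using significant_long[OF s] by blast
    qed
  next
    fix w assume "w \<in> {[False], [True]} \<union> {x # L u n | x n. n \<ge> 1}"
    then have "significant u w" using significant_L by auto
    then show "w \<in> HB_vertices u" by (simp add: HB_vertices_def)
  qed
  have A: "HB_arrows u = S1 \<union> S2 \<union> S3 \<union> S4"
  proof (intro equalityI subsetI)
    fix p assume p: "p \<in> HB_arrows u"
    obtain \<alpha> \<beta> where ab: "p = (\<alpha>, \<beta>)" by (cases p)
    show "p \<in> S1 \<union> S2 \<union> S3 \<union> S4"
    proof (cases "length \<alpha> = 1")
      case True
      then have "p \<in> S1" using one p ab by blast
      then show ?thesis by blast
    next
      case False
      have s: "significant u \<alpha>" and b: "\<exists>b. \<alpha> @ [b] \<in> lang u \<and> \<beta> = sig u (\<alpha> @ [b])"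
        using p ab by (auto simp: arrows_iff)
      obtain x n where xn: "n \<ge> 1" "\<alpha> = x # L u n" using significant_long[OF s False] by blast
      obtain b where b: "x # L u n @ [b] \<in> lang u" "\<beta> = sig u (x # L u n @ [b])" using b xn by auto
      show ?thesis
      proof (cases "b = lsym u (Suc n)")
        case True
        then have "x # L u n @ [b] = x # L u (Suc n)" using L_Suc[of n] by simp
        then have "\<beta> = x # L u (n + 1)" using b(2) sig_self[OF significant_L[of "Suc n" x]] by simp
        then have "p \<in> S2" using ab xn unfolding S2_def by blast
        then show ?thesis by blast
      next
        case False
        obtain m w where mw: "m < n" "consecutive_rss u (w # L u m) (x # L u n)"
          "if x \<noteq> w then sig u (x # L u n @ [b]) = w # L u (m + 1)
           else b \<noteq> lsym u (m + 1) \<and> sig u (x # L u n @ [b]) = sig u (w # L u m @ [b])"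
          using arrow_long[OF xn(1) b(1) False] by blast
        show ?thesis
        proof (cases "x = w")
          case True
          have nt: "\<not> (x \<noteq> w)" using True by simp
          have B: "b \<noteq> lsym u (m + 1) \<and> sig u (x # L u n @ [b]) = sig u (w # L u m @ [b])"
            using mw(3)[unfolded if_not_P[OF nt]] .
          have c2: "\<beta> = sig u (w # L u m @ [b])" using B b(2) by (metis (no_types))
          have c1: "b \<noteq> lsym u (m + 1)" using B by (rule conjunct1)
          note c = c1 c2
          have "p \<in> S4" unfolding S4_def using ab xn mw(1,2) True c by blast
          then show ?thesis by blast
        next
          case False
          have "\<beta> = w # L u (m + 1)" using mw(3)[unfolded if_P[OF False]] b(2) by simp
          then have "p \<in> S3" unfolding S3_def using ab xn mw(1,2) False by blast
          then show ?thesis by blast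
        qed
      qed
    qed
  next
    fix p assume p: "p \<in> S1 \<union> S2 \<union> S3 \<union> S4"
    show "p \<in> HB_arrows u"
    proof -
      consider "p \<in> S1" | "p \<in> S2" | "p \<in> S3" | "p \<in> S4" using p by blast
      then show ?thesis
      proof cases
        case 1 then show ?thesis using one by blast
      next
        case 2
        then obtain x n where xn: "n \<ge> 1" "p = (x # L u n, x # L u (n + 1))" unfolding S2_def by blast
        have "x # L u n @ [lsym u (Suc n)] = x # L u (Suc n)" using L_Suc[of n] by simp
        moreover have "x # L u (Suc n) \<in> lang u" by (rule L_Cons_lang)
        moreover have "sig u (x # L u (Suc n)) = x # L u (Suc n)"
          using sig_self[OF significant_L[of "Suc n" x]] by simp
        ultimately have "(x # L u n) @ [lsym u (Suc n)] \<in> lang u \<and>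
            x # L u (n + 1) = sig u ((x # L u n) @ [lsym u (Suc n)])" by simp
        then show ?thesis unfolding arrows_iff xn(2) using significant_L[OF xn(1), of x] by blast
      next
        case 3
        then obtain x w n m where xw: "p = (x # L u n, w # L u (m + 1))" "m < n"
          "consecutive_rss u (w # L u m) (x # L u n)" "x \<noteq> w" unfolding S3_def by blast
        have n1: "n \<ge> 1" using xw(2) by simp
        show ?thesis unfolding xw(1) arrows_iff append_Cons
          using significant_L[OF n1, of x] arrow_cons(1)[OF xw(3)] arrow_cons(2)[OF xw(3) xw(4)] by (metis (no_types))
      next
        case 4
        then obtain x w n m y where xw: "p = (x # L u n, sig u (w # L u m @ [y]))" "m < n"
          "consecutive_rss u (w # L u m) (x # L u n)" "x = w" "y \<noteq> lsym u (m + 1)"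
          unfolding S4_def by blast
        have n1: "n \<ge> 1" using xw(2) by simp
        show ?thesis unfolding xw(1) arrows_iff append_Cons
          using significant_L[OF n1, of x] arrow_cons(1)[OF xw(3)] arrow_cons(3)[OF xw(3) xw(4) xw(5)] by (metis (no_types))
      qed
    qed
  qed
  show ?thesis using V A unfolding S1_def S2_def S3_def S4_def by simp
qed


end
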